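(* Let $\Gamma$ be a cofinite graph and let $\Sigma$ be a uniform subgraph of $\Gamma$ (a subgraph with the subspace uniformity, which is itself a cofinite graph). Then: (1) If $\Sigma$ is path connected, then $\Sigma$ is cofinitely connected. (2) If $\Sigma$ is cofinitely connected, then so is its closure $\overline{\Sigma}$ in $\Gamma$ (which is a cofinite subgraph of $\Gamma$). (3) If $\Sigma$ is cofinitely connected and $f\colon\Gamma\to\Delta$ is a uniformly continuous map of graphs into a cofinite graph $\Delta$, then $f(\Sigma)$ is cofinitely connected as a cofinite subgraph of $\Delta$.
   Context: A graph $\Gamma$ is a set $\Gamma=V(\Gamma)\sqcup E(\Gamma)$ with maps $s,t\colon E(\Gamma)\to V(\Gamma)$ and a fixed-point-free involution $e\mapsto\overline e$ of $E(\Gamma)$ with $s(\overline e)=t(e)$, $t(\overline e)=s(e)$. A subgraph is a subset closed under $s,t$ and $e\mapsto\overline e$. A map of graphs sends vertices to vertices and edges to edges and commutes with $s$, $t$ and $e\mapsto\overline e$. An equivalence relation $R$ on a graph is compatible if $R\subseteq (V\times V)\cup(E\times E)$, $(e,e')\in R$ implies $(s(e),s(e')),(t(e),t(e')),(\overline e,\overline{e'})\in R$, and $(e,\overline e)\notin R$ for all edges $e$; then $\Gamma/R$ is a graph. A cofinite entourage is an entourage that is an equivalence relation with finitely many classes. A cofinite graph is a graph with a Hausdorff uniformity in which the compatible cofinite entourages form a fundamental system of entourages. A graph is path connected if any two vertices are joined by a finite path of edges $e_1\cdots e_n$ with $t(e_i)=s(e_{i+1})$. A cofinite graph is cofinitely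 connected if $\Gamma/R$ is path connected for every compatible cofinite entourage $R$. *)

theory Defs
  imports Main
begin

text \<open>A graph (possibly with a uniformity) living in an ambient type 'a:
  carrier = the set Gamma = V(Gamma) disjoint-union E(Gamma), verts = V(Gamma),
  edges are carrier - verts; src, tgt are s, t; rev is the involution e |-> bar e;
  unif is the set of entourages of the uniformity on the carrier.\<close>
record 'a cgraph =
  carrier :: "'a set"
  verts :: "'a set"
  src :: "'a \<Rightarrow> 'a"
  tgt :: "'a \<Rightarrow> 'a"
  rev :: "'a \<Rightarrow> 'a"
  unif :: "('a \<times> 'a) set set"

definition edges :: "('a, 'b) cgraph_scheme \<Rightarrow> 'a set" where
  "edges \<Gamma> = carrier \<Gamma> - verts \<Gamma>"

definition is_graph :: "('a, 'b) cgraph_scheme \<Rightarrow> bool" where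
  "is_graph \<Gamma> \<longleftrightarrow> verts \<Gamma> \<subseteq> carrier \<Gamma> \<and>
     (\<forall>e\<in>edges \<Gamma>. src \<Gamma> e \<in> verts \<Gamma> \<and> tgt \<Gamma> e \<in> verts \<Gamma> \<and>
        rev \<Gamma> e \<in> edges \<Gamma> \<and> rev \<Gamma> e \<noteq> e \<and> rev \<Gamma> (rev \<Gamma> e) = e \<and>
        src \<Gamma> (rev \<Gamma> e) = tgt \<Gamma> e \<and> tgt \<Gamma> (rev \<Gamma> e) = src \<Gamma> e)"

definition is_subgraph :: "'a set \<Rightarrow> ('a, 'b) cgraph_scheme \<Rightarrow> bool" where
  "is_subgraph S \<Gamma> \<longleftrightarrow> S \<subseteq> carrier \<Gamma> \<and>
     (\<forall>e\<in>S \<inter> edges \<Gamma>. src \<Gamma> e \<in> S \<and> tgt \<Gamma> e \<in> S \<and> rev \<Gamma> e \<in> S)"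

definition uniformity_on :: "'a set \<Rightarrow> ('a \<times> 'a) set set \<Rightarrow> bool" where
  "uniformity_on X U \<longleftrightarrow> U \<subseteq> Pow (X \<times> X) \<and> X \<times> X \<in> U \<and>
     (\<forall>D\<in>U. Id_on X \<subseteq> D) \<and>
     (\<forall>D\<in>U. \<forall>D'. D \<subseteq> D' \<and> D' \<subseteq> X \<times> X \<longrightarrow> D' \<in> U) \<and>
     (\<forall>D\<in>U. \<forall>D'\<in>U. D \<inter> D' \<in> U) \<and>
     (\<forall>D\<in>U. D\<inverse> \<in> U) \<and>
     (\<forall>D\<in>U. \<exists>D'\<in>U. D' O D' \<subseteq> D)"

definition hausdorff_unif :: "'a set \<Rightarrow> ('a \<times> 'a) set set \<Rightarrow> bool" where
  "hausdorff_unif X U \<longleftrightarrow> \<Inter>U = Id_on X"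

definition compatible :: "('a, 'b) cgraph_scheme \<Rightarrow> ('a \<times> 'a) set \<Rightarrow> bool" where
  "compatible \<Gamma> R \<longleftrightarrow> equiv (carrier \<Gamma>) R \<and>
     R \<subseteq> (verts \<Gamma> \<times> verts \<Gamma>) \<union> (edges \<Gamma> \<times> edges \<Gamma>) \<and>
     (\<forall>e e'. (e, e') \<in> R \<and> e \<in> edges \<Gamma> \<longrightarrow>
        (src \<Gamma> e, src \<Gamma> e') \<in> R \<and> (tgt \<Gamma> e, tgt \<Gamma> e') \<in> R \<and>
        (rev \<Gamma> e, rev \<Gamma> e') \<in> R) \<and>
     (\<forall>e\<in>edges \<Gamma>. (e, rev \<Gamma> e) \<notin> R)"

definition compatible_cofinite_entourage :: "('a, 'b) cgraph_scheme \<Rightarrow> ('a \<times> 'a) set \<Rightarrow> bool" where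
  "compatible_cofinite_entourage \<Gamma> R \<longleftrightarrow> R \<in> unif \<Gamma> \<and> compatible \<Gamma> R \<and>
     finite (carrier \<Gamma> // R)"

definition cofinite_graph :: "('a, 'b) cgraph_scheme \<Rightarrow> bool" where
  "cofinite_graph \<Gamma> \<longleftrightarrow> is_graph \<Gamma> \<and> uniformity_on (carrier \<Gamma>) (unif \<Gamma>) \<and>
     hausdorff_unif (carrier \<Gamma>) (unif \<Gamma>) \<and>
     (\<forall>D\<in>unif \<Gamma>. \<exists>R. compatible_cofinite_entourage \<Gamma> R \<and> R \<subseteq> D)"

text \<open>Quotient graph Gamma/R (on equivalence classes); its uniformity is irrelevant.\<close>
definition quotient_graph :: "('a, 'b) cgraph_scheme \<Rightarrow> ('a \<times> 'a) set \<Rightarrow> 'a set cgraph" where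
  "quotient_graph \<Gamma> R =
    \<lparr> carrier = carrier \<Gamma> // R, verts = verts \<Gamma> // R,
      src = (\<lambda>C. R `` {src \<Gamma> (SOME e. e \<in> C)}),
      tgt = (\<lambda>C. R `` {tgt \<Gamma> (SOME e. e \<in> C)}),
      rev = (\<lambda>C. R `` {rev \<Gamma> (SOME e. e \<in> C)}),
      unif = {} \<rparr>"

definition path_connected_graph :: "('a, 'b) cgraph_scheme \<Rightarrow> bool" where
  "path_connected_graph \<Gamma> \<longleftrightarrow>
     (\<forall>v\<in>verts \<Gamma>. \<forall>w\<in>verts \<Gamma>. v = w \<or>
        (\<exists>es. es \<noteq> [] \<and> set es \<subseteq> edges \<Gamma> \<and> src \<Gamma> (hd es) = v \<and> tgt \<Gamma> (last es) = w \<and>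
              (\<forall>i. Suc i < length es \<longrightarrow> tgt \<Gamma> (es ! i) = src \<Gamma> (es ! Suc i))))"

definition cofinitely_connected :: "('a, 'b) cgraph_scheme \<Rightarrow> bool" where
  "cofinitely_connected \<Gamma> \<longleftrightarrow>
     (\<forall>R. compatible_cofinite_entourage \<Gamma> R \<longrightarrow> path_connected_graph (quotient_graph \<Gamma> R))"

definition uniform_subgraph :: "'a cgraph \<Rightarrow> 'a set \<Rightarrow> 'a cgraph" where
  "uniform_subgraph \<Gamma> S = \<Gamma>\<lparr> carrier := S, verts := verts \<Gamma> \<inter> S,
      unif := {D \<inter> (S \<times> S) | D. D \<in> unif \<Gamma>} \<rparr>"

definition unif_closure :: "'a cgraph \<Rightarrow> 'a set \<Rightarrow> 'a set" where
  "unif_closure \<Gamma> S = {x \<in> carrier \<Gamma>. \<forall>D\<in>unif \<Gamma>. \<exists>y\<in>S. (x, y) \<in> D}"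

definition graph_map :: "'a cgraph \<Rightarrow> 'b cgraph \<Rightarrow> ('a \<Rightarrow> 'b) \<Rightarrow> bool" where
  "graph_map \<Gamma> \<Delta> f \<longleftrightarrow> f ` verts \<Gamma> \<subseteq> verts \<Delta> \<and> f ` edges \<Gamma> \<subseteq> edges \<Delta> \<and>
     (\<forall>e\<in>edges \<Gamma>. f (src \<Gamma> e) = src \<Delta> (f e) \<and> f (tgt \<Gamma> e) = tgt \<Delta> (f e) \<and>
        f (rev \<Gamma> e) = rev \<Delta> (f e))"

definition unif_continuous :: "'a cgraph \<Rightarrow> 'b cgraph \<Rightarrow> ('a \<Rightarrow> 'b) \<Rightarrow> bool" where
  "unif_continuous \<Gamma> \<Delta> f \<longleftrightarrow>
     (\<forall>D\<in>unif \<Delta>. {(x, y). x \<in> carrier \<Gamma> \<and> y \<in> carrier \<Gamma> \<and> (f x, f y) \<in> D} \<in> unif \<Gamma>)"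

end

theory Submission
  imports Defs
begin

definition qstep :: "('a, 'b) cgraph_scheme \<Rightarrow> ('a \<times> 'a) set \<Rightarrow> ('a \<times> 'a) set" where
  "qstep G R = {(v,w). \<exists>e\<in>edges G. (v, src G e) \<in> R \<and> (tgt G e, w) \<in> R}"

definition qconn :: "('a, 'b) cgraph_scheme \<Rightarrow> ('a \<times> 'a) set \<Rightarrow> bool" where
  "qconn G R \<longleftrightarrow> (\<forall>v\<in>verts G. \<forall>w\<in>verts G. (v,w) \<in> (R \<union> qstep G R)\<^sup>*)"

definition wfg :: "('a, 'b) cgraph_scheme \<Rightarrow> bool" where
  "wfg G \<longleftrightarrow> verts G \<subseteq> carrier G \<and> (\<forall>e\<in>edges G. src G e \<in> verts G \<and> tgt G e \<in> verts G)"

definition pth :: "('a, 'b) cgraph_scheme \<Rightarrow> 'a list \<Rightarrow> 'a \<Rightarrow> 'a \<Rightarrow> bool" where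
  "pth Q es a b \<longleftrightarrow> es \<noteq> [] \<and> set es \<subseteq> edges Q \<and> src Q (hd es) = a \<and> tgt Q (last es) = b \<and>
              (\<forall>i. Suc i < length es \<longrightarrow> tgt Q (es ! i) = src Q (es ! Suc i))"

lemma pcg_iff: "path_connected_graph Q \<longleftrightarrow> (\<forall>v\<in>verts Q. \<forall>w\<in>verts Q. v = w \<or> (\<exists>es. pth Q es v w))"
  unfolding path_connected_graph_def pth_def by blast

lemma pth_single: "C \<in> edges Q \<Longrightarrow> pth Q [C] (src Q C) (tgt Q C)"
  unfolding pth_def by auto

lemma pth_snoc:
  assumes "pth Q es a b" "C \<in> edges Q" "src Q C = b"
  shows "pth Q (es @ [C]) a (tgt Q C)"
proof -
  have ne: "es \<noteq> []" using assms unfolding pth_def by auto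
  have "\<forall>i. Suc i < length (es@[C]) \<longrightarrow> tgt Q ((es@[C]) ! i) = src Q ((es@[C]) ! Suc i)"
  proof (intro allI impI)
    fix i assume i: "Suc i < length (es@[C])"
    show "tgt Q ((es@[C]) ! i) = src Q ((es@[C]) ! Suc i)"
    proof (cases "Suc i < length es")
      case True then show ?thesis using assms unfolding pth_def by (auto simp: nth_append)
    next
      case False
      then have "i = length es - 1" "Suc i = length es" using i by auto
      then show ?thesis using assms ne unfolding pth_def by (auto simp: nth_append last_conv_nth)
    qed
  qed
  then show ?thesis using assms ne unfolding pth_def by auto
qed

lemma pth_Cons_inv:
  assumes "pth Q (C # es) a b" "es \<noteq> []"
  shows "pth Q es (tgt Q C) b" "a = src Q C" "C \<in> edges Q"
proof -
  from assms(1)[unfolded pth_def] have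
    h: "set (C#es) \<subseteq> edges Q" "src Q C = a" "tgt Q (last (C#es)) = b"
       "\<forall>i. Suc i < length (C#es) \<longrightarrow> tgt Q ((C#es) ! i) = src Q ((C#es) ! Suc i)" by auto
  have "tgt Q C = src Q (hd es)" using h(4)[rule_format, of 0] assms(2) by (cases es) auto
  moreover have "\<forall>i. Suc i < length es \<longrightarrow> tgt Q (es ! i) = src Q (es ! Suc i)"
    using h(4) by (metis Suc_less_eq length_Cons nth_Cons_Suc)
  ultimately show "pth Q es (tgt Q C) b" using h assms(2) unfolding pth_def by auto
  show "a = src Q C" "C \<in> edges Q" using h by auto
qed

lemma compat_equiv: "compatible G R \<Longrightarrow> equiv (carrier G) R"
  unfolding compatible_def by auto

lemma compat_VE: "compatible G R \<Longrightarrow> (x,y) \<in> R \<Longrightarrow> (x \<in> verts G \<longleftrightarrow> y \<in> verts G)"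
  unfolding compatible_def edges_def by auto

lemma compat_src: "compatible G R \<Longrightarrow> (e,e') \<in> R \<Longrightarrow> e \<in> edges G \<Longrightarrow>
   (src G e, src G e') \<in> R \<and> (tgt G e, tgt G e') \<in> R"
  unfolding compatible_def by blast

lemma qedge:
  assumes c: "compatible G R" and w: "wfg G" and e: "e \<in> edges G"
  shows "R``{e} \<in> edges (quotient_graph G R)"
    "src (quotient_graph G R) (R``{e}) = R``{src G e}"
    "tgt (quotient_graph G R) (R``{e}) = R``{tgt G e}"
proof -
  have eq: "equiv (carrier G) R" using c by (rule compat_equiv)
  have ec: "e \<in> carrier G" using e unfolding edges_def by auto
  have ee: "e \<in> R``{e}" using eq ec by (auto simp: equiv_def refl_on_def)
  have "R``{e} \<notin> verts G // R"
  proof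
    assume "R``{e} \<in> verts G // R"
    then obtain z where z: "z \<in> verts G" "R``{e} = R``{z}" by (auto elim: quotientE)
    then have "(z,e) \<in> R" using ee by auto
    then show False using compat_VE[OF c] z e unfolding edges_def by auto
  qed
  moreover have "R``{e} \<in> carrier G // R" using ec by (rule quotientI)
  ultimately show "R``{e} \<in> edges (quotient_graph G R)"
    unfolding edges_def quotient_graph_def by simp
  define x where "x = (SOME x. x \<in> R``{e})"
  have "x \<in> R``{e}" unfolding x_def using ee by (rule someI)
  then have ex: "(e,x) \<in> R" by auto
  from compat_src[OF c ex e] have "(src G e, src G x) \<in> R" "(tgt G e, tgt G x) \<in> R" by auto
  then have "R``{src G e} = R``{src G x}" "R``{tgt G e} = R``{tgt G x}"
    using eq equiv_class_eq by metis+
  then show "src (quotient_graph G R) (R``{e}) = R``{src G e}"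
    "tgt (quotient_graph G R) (R``{e}) = R``{tgt G e}"
    unfolding quotient_graph_def x_def by simp_all
qed

lemma qedge_rep:
  assumes c: "compatible G R" and C: "C \<in> edges (quotient_graph G R)"
  shows "(SOME x. x \<in> C) \<in> edges G"
    "src (quotient_graph G R) C = R``{src G (SOME x. x \<in> C)}"
    "tgt (quotient_graph G R) C = R``{tgt G (SOME x. x \<in> C)}"
proof -
  have eq: "equiv (carrier G) R" using c by (rule compat_equiv)
  from C have C1: "C \<in> carrier G // R" "C \<notin> verts G // R"
    unfolding edges_def quotient_graph_def by auto
  then obtain e where e: "e \<in> carrier G" "C = R``{e}" by (auto elim: quotientE)
  have ev: "e \<notin> verts G" using C1 e by (auto intro: quotientI)
  have ee: "e \<in> C" using eq e by (auto simp: equiv_def refl_on_def)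
  have "(SOME x. x \<in> C) \<in> C" using ee by (rule someI)
  then have "(e, SOME x. x \<in> C) \<in> R" using e by auto
  moreover then have "(SOME x. x \<in> C) \<in> carrier G" using eq unfolding equiv_def refl_on_def by auto
  ultimately show "(SOME x. x \<in> C) \<in> edges G" using compat_VE[OF c] ev unfolding edges_def by blast
  show "src (quotient_graph G R) C = R``{src G (SOME x. x \<in> C)}"
    "tgt (quotient_graph G R) C = R``{tgt G (SOME x. x \<in> C)}"
    unfolding quotient_graph_def by auto
qed


lemma qconnB:
  assumes c: "compatible G R" and w: "wfg G" and q: "qconn G R"
  shows "path_connected_graph (quotient_graph G R)"
proof -
  let ?Q = "quotient_graph G R"
  have eq: "equiv (carrier G) R" using c by (rule compat_equiv)
  have main: "u \<in> verts G \<and> (R``{v} = R``{u} \<or> (\<exists>es. pth ?Q es (R``{v}) (R``{u})))"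
    if v: "v \<in> verts G" and vu: "(v,u) \<in> (R \<union> qstep G R)\<^sup>*" for v u
    using vu
  proof (induction rule: rtrancl_induct)
    case base then show ?case using v by auto
  next
    case (step u u')
    show ?case
    proof (cases "(u,u') \<in> R")
      case True
      then have "u' \<in> verts G" using compat_VE[OF c] step by blast
      moreover have "R``{u} = R``{u'}" by (rule equiv_class_eq[OF eq True])
      ultimately show ?thesis using step by auto
    next
      case False
      then obtain e where e: "e \<in> edges G" "(u, src G e) \<in> R" "(tgt G e, u') \<in> R"
        using step(2) unfolding qstep_def by auto
      have "tgt G e \<in> verts G" using w e unfolding wfg_def by auto
      then have u': "u' \<in> verts G" using compat_VE[OF c e(3)] by simp
      have s: "src ?Q (R``{e}) = R``{u}" using qedge(2)[OF c w e(1)] equiv_class_eq[OF eq e(2)] by simp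
      have t: "tgt ?Q (R``{e}) = R``{u'}" using qedge(3)[OF c w e(1)] equiv_class_eq[OF eq e(3)] by simp
      have E: "R``{e} \<in> edges ?Q" using qedge(1)[OF c w e(1)] .
      from step(3)[THEN conjunct2] have "\<exists>es. pth ?Q es (R``{v}) (R``{u'})"
      proof
        assume "R``{v} = R``{u}"
        then show ?thesis using pth_single[OF E] s t by metis
      next
        assume "\<exists>es. pth ?Q es (R``{v}) (R``{u})"
        then obtain es where "pth ?Q es (R``{v}) (R``{u})" by blast
        from pth_snoc[OF this E s] t show ?thesis by metis
      qed
      then show ?thesis using u' by auto
    qed
  qed
  show ?thesis unfolding pcg_iff
  proof (intro ballI)
    fix a b assume a: "a \<in> verts ?Q" and b: "b \<in> verts ?Q"
    from a obtain v where v: "v \<in> verts G" "a = R``{v}"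
      unfolding quotient_graph_def by (auto elim: quotientE)
    from b obtain u where u: "u \<in> verts G" "b = R``{u}"
      unfolding quotient_graph_def by (auto elim: quotientE)
    from q v u have "(v,u) \<in> (R \<union> qstep G R)\<^sup>*" unfolding qconn_def by auto
    from main[OF v(1) this] show "a = b \<or> (\<exists>es. pth ?Q es a b)" using v u by auto
  qed
qed

lemma qconnA_aux:
  assumes c: "compatible G R" and w: "wfg G"
  shows "pth (quotient_graph G R) es a b \<Longrightarrow> v \<in> verts G \<Longrightarrow> R``{v} = a \<Longrightarrow>
     u \<in> verts G \<Longrightarrow> R``{u} = b \<Longrightarrow> (v,u) \<in> (R \<union> qstep G R)\<^sup>*"
proof (induction es arbitrary: a v)
  case Nil then show ?case unfolding pth_def by auto
next
  case (Cons C es)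
  let ?Q = "quotient_graph G R"
  have eq: "equiv (carrier G) R" using c by (rule compat_equiv)
  have vc: "verts G \<subseteq> carrier G" using w unfolding wfg_def by auto
  have CE: "C \<in> edges ?Q" using Cons.prems unfolding pth_def by auto
  define x where "x = (SOME x. x \<in> C)"
  have x: "x \<in> edges G" "src ?Q C = R``{src G x}" "tgt ?Q C = R``{tgt G x}"
    using qedge_rep[OF c CE] unfolding x_def by auto
  have sv: "src G x \<in> verts G" "tgt G x \<in> verts G" using w x(1) unfolding wfg_def by auto
  have "a = src ?Q C" using Cons.prems unfolding pth_def by auto
  then have "R``{v} = R``{src G x}" using Cons.prems x by simp
  then have vs: "(v, src G x) \<in> R" using eq_equiv_class_iff[OF eq, of v "src G x"] vc sv Cons.prems(2) by auto
  have tt: "(tgt G x, tgt G x) \<in> R" using eq vc sv unfolding equiv_def refl_on_def by auto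
  show ?case
  proof (cases "es = []")
    case True
    then have "b = tgt ?Q C" using Cons.prems unfolding pth_def by auto
    then have "R``{u} = R``{tgt G x}" using Cons.prems x by simp
    then have "(tgt G x, u) \<in> R" using eq_equiv_class_iff[OF eq, of "tgt G x" u] vc sv Cons.prems(4) by auto
    then have "(v,u) \<in> qstep G R" using vs x(1) unfolding qstep_def by auto
    then show ?thesis by auto
  next
    case False
    have p: "pth ?Q es (tgt ?Q C) b" using pth_Cons_inv(1)[OF Cons.prems(1) False] .
    have "(v, tgt G x) \<in> qstep G R" using vs tt x(1) unfolding qstep_def by auto
    moreover have "(tgt G x, u) \<in> (R \<union> qstep G R)\<^sup>*"
      using Cons.IH[OF p sv(2) x(3)[symmetric] Cons.prems(4,5)] .
    ultimately show ?thesis by (rule converse_rtrancl_into_rtrancl[OF UnI2])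
  qed
qed

lemma qconnA:
  assumes c: "compatible G R" and w: "wfg G" and p: "path_connected_graph (quotient_graph G R)"
  shows "qconn G R"
  unfolding qconn_def
proof (intro ballI)
  fix v u assume v: "v \<in> verts G" and u: "u \<in> verts G"
  have eq: "equiv (carrier G) R" using c by (rule compat_equiv)
  have vc: "verts G \<subseteq> carrier G" using w unfolding wfg_def by auto
  have "R``{v} \<in> verts (quotient_graph G R)" and "R``{u} \<in> verts (quotient_graph G R)"
    using v u unfolding quotient_graph_def by (auto intro: quotientI)
  have "R``{v} = R``{u} \<or> (\<exists>es. pth (quotient_graph G R) es (R``{v}) (R``{u}))"
    using p[unfolded pcg_iff, rule_format, OF \<open>R``{v} \<in> _\<close> \<open>R``{u} \<in> _\<close>] .
  then show "(v,u) \<in> (R \<union> qstep G R)\<^sup>*"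
  proof
    assume "R``{v} = R``{u}"
    then have "(v,u) \<in> R" using eq_equiv_class_iff[OF eq, of v u] vc v u by auto
    then show ?thesis by auto
  next
    assume "\<exists>es. pth (quotient_graph G R) es (R``{v}) (R``{u})"
    then obtain es where "pth (quotient_graph G R) es (R``{v}) (R``{u})" by blast
    from qconnA_aux[OF c w this v refl u refl] show ?thesis .
  qed
qed


lemma us_simps[simp]:
  "carrier (uniform_subgraph \<Gamma> S) = S" "verts (uniform_subgraph \<Gamma> S) = verts \<Gamma> \<inter> S"
  "src (uniform_subgraph \<Gamma> S) = src \<Gamma>" "tgt (uniform_subgraph \<Gamma> S) = tgt \<Gamma>"
  "rev (uniform_subgraph \<Gamma> S) = rev \<Gamma>"
  "unif (uniform_subgraph \<Gamma> S) = {D \<inter> (S \<times> S) | D. D \<in> unif \<Gamma>}"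
  "edges (uniform_subgraph \<Gamma> S) = S - verts \<Gamma>"
  unfolding uniform_subgraph_def edges_def by auto

lemma wfg_us:
  assumes "is_graph \<Gamma>" "S \<subseteq> carrier \<Gamma>" "\<forall>e\<in>S \<inter> edges \<Gamma>. src \<Gamma> e \<in> S \<and> tgt \<Gamma> e \<in> S"
  shows "wfg (uniform_subgraph \<Gamma> S)"
  using assms unfolding wfg_def is_graph_def edges_def by auto

lemma part1:
  assumes w: "wfg G" and p: "path_connected_graph G" and c: "compatible G R"
  shows "qconn G R"
proof -
  have eq: "equiv (carrier G) R" using c by (rule compat_equiv)
  have vc: "verts G \<subseteq> carrier G" using w unfolding wfg_def by auto
  have refl: "x \<in> verts G \<Longrightarrow> (x,x) \<in> R" for x using eq vc unfolding equiv_def refl_on_def by auto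
  have aux: "pth G es v u \<Longrightarrow> (v,u) \<in> (R \<union> qstep G R)\<^sup>*" for es v u
  proof (induction es arbitrary: v)
    case Nil then show ?case unfolding pth_def by auto
  next
    case (Cons e es)
    have e: "e \<in> edges G" "v = src G e" using Cons.prems unfolding pth_def by auto
    have sv: "src G e \<in> verts G" "tgt G e \<in> verts G" using w e unfolding wfg_def by auto
    show ?case
    proof (cases "es = []")
      case True
      then have "u = tgt G e" using Cons.prems unfolding pth_def by auto
      then have "(v,u) \<in> qstep G R" using e sv refl unfolding qstep_def by auto
      then show ?thesis by auto
    next
      case False
      have "(v, tgt G e) \<in> qstep G R" using e sv refl unfolding qstep_def by auto
      moreover have "(tgt G e, u) \<in> (R \<union> qstep G R)\<^sup>*"
        using Cons.IH[OF pth_Cons_inv(1)[OF Cons.prems False]] .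
      ultimately show ?thesis by (rule converse_rtrancl_into_rtrancl[OF UnI2])
    qed
  qed
  show ?thesis unfolding qconn_def
  proof (intro ballI)
    fix v u assume "v \<in> verts G" "u \<in> verts G"
    with p have "v = u \<or> (\<exists>es. pth G es v u)" unfolding pcg_iff by blast
    then show "(v,u) \<in> (R \<union> qstep G R)\<^sup>*" using aux by blast
  qed
qed

lemma rtrancl_map:
  assumes "(a,b) \<in> P\<^sup>*" "\<And>x y. (x,y) \<in> P \<Longrightarrow> (f x, f y) \<in> Q\<^sup>*"
  shows "(f a, f b) \<in> Q\<^sup>*"
  using assms(1)
proof (induction rule: rtrancl_induct)
  case base then show ?case by simp
next
  case (step y z) then show ?case using assms(2) by (meson rtrancl_trans)
qed


lemma closure_facts:
  assumes cg: "cofinite_graph \<Gamma>" and sg: "is_subgraph S \<Gamma>"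
  shows "S \<subseteq> unif_closure \<Gamma> S" "unif_closure \<Gamma> S \<subseteq> carrier \<Gamma>"
    "\<forall>e\<in>unif_closure \<Gamma> S \<inter> edges \<Gamma>. src \<Gamma> e \<in> unif_closure \<Gamma> S \<and> tgt \<Gamma> e \<in> unif_closure \<Gamma> S"
proof -
  have u: "uniformity_on (carrier \<Gamma>) (unif \<Gamma>)" and g: "is_graph \<Gamma>"
    using cg unfolding cofinite_graph_def by auto
  have Sc: "S \<subseteq> carrier \<Gamma>" using sg unfolding is_subgraph_def by auto
  show "S \<subseteq> unif_closure \<Gamma> S"
  proof
    fix x assume x: "x \<in> S"
    have idD: "\<forall>D\<in>unif \<Gamma>. Id_on (carrier \<Gamma>) \<subseteq> D" using u unfolding uniformity_on_def by (elim conjE) assumption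
    have "(x,x) \<in> Id_on (carrier \<Gamma>)" using x Sc by auto
    then have "\<forall>D\<in>unif \<Gamma>. (x,x) \<in> D" using idD by blast
    then show "x \<in> unif_closure \<Gamma> S" using x Sc unfolding unif_closure_def by auto
  qed
  show "unif_closure \<Gamma> S \<subseteq> carrier \<Gamma>" unfolding unif_closure_def by auto
  show "\<forall>e\<in>unif_closure \<Gamma> S \<inter> edges \<Gamma>. src \<Gamma> e \<in> unif_closure \<Gamma> S \<and> tgt \<Gamma> e \<in> unif_closure \<Gamma> S"
  proof
    fix e assume e: "e \<in> unif_closure \<Gamma> S \<inter> edges \<Gamma>"
    have stc: "src \<Gamma> e \<in> carrier \<Gamma>" "tgt \<Gamma> e \<in> carrier \<Gamma>" using g e unfolding is_graph_def by auto
    have "\<exists>y\<in>S. (src \<Gamma> e, y) \<in> D \<and> (\<exists>y\<in>S. (tgt \<Gamma> e, y) \<in> D)" if D: "D \<in> unif \<Gamma>" for D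
    proof -
      have cgR: "\<forall>D\<in>unif \<Gamma>. \<exists>R. compatible_cofinite_entourage \<Gamma> R \<and> R \<subseteq> D"
        using cg unfolding cofinite_graph_def by (elim conjE) assumption
      obtain R where R: "compatible_cofinite_entourage \<Gamma> R" "R \<subseteq> D" using cgR D by blast
      have c: "compatible \<Gamma> R" and RU: "R \<in> unif \<Gamma>" using R unfolding compatible_cofinite_entourage_def by auto
      obtain y where y: "y \<in> S" "(e,y) \<in> R" using e RU unfolding unif_closure_def by blast
      have "y \<in> edges \<Gamma>" using compat_VE[OF c y(2)] y(1) Sc e unfolding edges_def by auto
      then have "src \<Gamma> y \<in> S" "tgt \<Gamma> y \<in> S" using sg y unfolding is_subgraph_def by auto
      moreover have "(src \<Gamma> e, src \<Gamma> y) \<in> R" "(tgt \<Gamma> e, tgt \<Gamma> y) \<in> R" using compat_src[OF c y(2)] e by auto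
      ultimately show ?thesis using R(2) by blast
    qed
    then show "src \<Gamma> e \<in> unif_closure \<Gamma> S \<and> tgt \<Gamma> e \<in> unif_closure \<Gamma> S"
      using stc unfolding unif_closure_def by auto
  qed
qed

lemma part2:
  assumes cg: "cofinite_graph \<Gamma>" and sg: "is_subgraph S \<Gamma>"
    and cc: "cofinitely_connected (uniform_subgraph \<Gamma> S)"
  shows "cofinitely_connected (uniform_subgraph \<Gamma> (unif_closure \<Gamma> S))"
  unfolding cofinitely_connected_def
proof (intro allI impI)
  define T where "T = unif_closure \<Gamma> S"
  fix R assume RT: "compatible_cofinite_entourage (uniform_subgraph \<Gamma> (unif_closure \<Gamma> S)) R"
  have g: "is_graph \<Gamma>" using cg unfolding cofinite_graph_def by auto
  have Sc: "S \<subseteq> carrier \<Gamma>" using sg unfolding is_subgraph_def by auto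
  have ST: "S \<subseteq> T" "T \<subseteq> carrier \<Gamma>" and Tsub: "\<forall>e\<in>T \<inter> edges \<Gamma>. src \<Gamma> e \<in> T \<and> tgt \<Gamma> e \<in> T"
    using closure_facts[OF cg sg] unfolding T_def by auto
  have Ssub: "\<forall>e\<in>S \<inter> edges \<Gamma>. src \<Gamma> e \<in> S \<and> tgt \<Gamma> e \<in> S \<and> rev \<Gamma> e \<in> S"
    using sg unfolding is_subgraph_def by auto
  have RT': "R \<in> {D \<inter> (T \<times> T) | D. D \<in> unif \<Gamma>}" "compatible (uniform_subgraph \<Gamma> T) R" "finite (T // R)"
    using RT unfolding compatible_cofinite_entourage_def T_def by auto
  then obtain D where D: "D \<in> unif \<Gamma>" "R = D \<inter> (T \<times> T)" by blast
  have cR: "equiv T R" "R \<subseteq> ((verts \<Gamma> \<inter> T) \<times> (verts \<Gamma> \<inter> T)) \<union> ((T - verts \<Gamma>) \<times> (T - verts \<Gamma>))"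
    "\<forall>e e'. (e, e') \<in> R \<and> e \<in> T - verts \<Gamma> \<longrightarrow>
        (src \<Gamma> e, src \<Gamma> e') \<in> R \<and> (tgt \<Gamma> e, tgt \<Gamma> e') \<in> R \<and> (rev \<Gamma> e, rev \<Gamma> e') \<in> R"
    "\<forall>e\<in>T - verts \<Gamma>. (e, rev \<Gamma> e) \<notin> R"
    using RT'(2) unfolding compatible_def by auto
  define R' where "R' = R \<inter> (S \<times> S)"
  have eqS: "equiv S R'" using cR(1) ST(1) unfolding R'_def equiv_def refl_on_def sym_def trans_def by blast
  have cR': "compatible (uniform_subgraph \<Gamma> S) R'"
    unfolding compatible_def us_simps
  proof (intro conjI eqS)
    show "R' \<subseteq> (verts \<Gamma> \<inter> S) \<times> (verts \<Gamma> \<inter> S) \<union> (S - verts \<Gamma>) \<times> (S - verts \<Gamma>)"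
      using cR(2) unfolding R'_def by auto
    show "\<forall>e e'. (e, e') \<in> R' \<and> e \<in> S - verts \<Gamma> \<longrightarrow>
        (src \<Gamma> e, src \<Gamma> e') \<in> R' \<and> (tgt \<Gamma> e, tgt \<Gamma> e') \<in> R' \<and> (rev \<Gamma> e, rev \<Gamma> e') \<in> R'"
    proof (intro allI impI)
      fix e e' assume a: "(e, e') \<in> R' \<and> e \<in> S - verts \<Gamma>"
      then have "e' \<in> S - verts \<Gamma>" using cR(2) unfolding R'_def by auto
      then have "e \<in> S \<inter> edges \<Gamma>" "e' \<in> S \<inter> edges \<Gamma>" using a Sc unfolding edges_def by auto
      then show "(src \<Gamma> e, src \<Gamma> e') \<in> R' \<and> (tgt \<Gamma> e, tgt \<Gamma> e') \<in> R' \<and> (rev \<Gamma> e, rev \<Gamma> e') \<in> R'"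
        using cR(3) a Ssub ST unfolding R'_def by blast
    qed
    show "\<forall>e\<in>S - verts \<Gamma>. (e, rev \<Gamma> e) \<notin> R'" using cR(4) ST unfolding R'_def by auto
  qed
  have uR': "R' \<in> unif (uniform_subgraph \<Gamma> S)"
    using D ST(1) unfolding R'_def by auto
  have "S // R' \<subseteq> (\<lambda>C. C \<inter> S) ` (T // R)"
  proof
    fix C assume "C \<in> S // R'"
    then obtain x where x: "x \<in> S" "C = R'``{x}" by (auto elim: quotientE)
    then have "C = R``{x} \<inter> S" unfolding R'_def by auto
    moreover have "R``{x} \<in> T // R" using x ST by (auto intro: quotientI)
    ultimately show "C \<in> (\<lambda>C. C \<inter> S) ` (T // R)" by auto
  qed
  then have "finite (S // R')" using RT'(3) by (meson finite_surj)
  then have "compatible_cofinite_entourage (uniform_subgraph \<Gamma> S) R'"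
    unfolding compatible_cofinite_entourage_def using uR' cR' by simp
  then have "path_connected_graph (quotient_graph (uniform_subgraph \<Gamma> S) R')"
    using cc unfolding cofinitely_connected_def by auto
  then have qS: "qconn (uniform_subgraph \<Gamma> S) R'"
    using qconnA[OF cR' wfg_us[OF g Sc]] Ssub by auto
  have wT: "wfg (uniform_subgraph \<Gamma> T)" using wfg_us[OF g ST(2) Tsub] .
  have near: "\<exists>y\<in>verts \<Gamma> \<inter> S. (v,y) \<in> R" if v: "v \<in> verts \<Gamma> \<inter> T" for v
  proof -
    obtain y where y: "y \<in> S" "(v,y) \<in> D" using v D(1) unfolding T_def unif_closure_def by blast
    then have "(v,y) \<in> R" using D(2) v ST by auto
    moreover then have "y \<in> verts \<Gamma>" using cR(2) v by auto
    ultimately show ?thesis using y by auto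
  qed
  have mono: "(R' \<union> qstep (uniform_subgraph \<Gamma> S) R')\<^sup>* \<subseteq> (R \<union> qstep (uniform_subgraph \<Gamma> T) R)\<^sup>*"
    apply (rule rtrancl_mono)
    using ST unfolding R'_def qstep_def by auto
  have "qconn (uniform_subgraph \<Gamma> T) R"
    unfolding qconn_def us_simps
  proof (intro ballI)
    fix v w assume v: "v \<in> verts \<Gamma> \<inter> T" and w: "w \<in> verts \<Gamma> \<inter> T"
    obtain y where y: "y \<in> verts \<Gamma> \<inter> S" "(v,y) \<in> R" using near[OF v] by blast
    obtain y' where y': "y' \<in> verts \<Gamma> \<inter> S" "(w,y') \<in> R" using near[OF w] by blast
    have "(y,y') \<in> (R \<union> qstep (uniform_subgraph \<Gamma> T) R)\<^sup>*"
      using qS y y' mono unfolding qconn_def by auto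
    moreover have "(y',w) \<in> R" using y'(2) cR(1) unfolding equiv_def sym_def by blast
    ultimately show "(v,w) \<in> (R \<union> qstep (uniform_subgraph \<Gamma> T) R)\<^sup>*" using y(2)
      by (meson UnI1 converse_rtrancl_into_rtrancl rtrancl.rtrancl_into_rtrancl)
  qed
  from qconnB[OF RT'(2) wT this] show "path_connected_graph (quotient_graph (uniform_subgraph \<Gamma> (unif_closure \<Gamma> S)) R)"
    unfolding T_def .
qed


lemma part3:
  fixes \<Gamma> :: "'a cgraph" and \<Delta> :: "'b cgraph"
  assumes cg: "cofinite_graph \<Gamma>" and sg: "is_subgraph S \<Gamma>"
    and cd: "cofinite_graph \<Delta>" and gm: "graph_map \<Gamma> \<Delta> f" and uc: "unif_continuous \<Gamma> \<Delta> f"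
    and cc: "cofinitely_connected (uniform_subgraph \<Gamma> S)"
  shows "cofinitely_connected (uniform_subgraph \<Delta> (f ` S))"
  unfolding cofinitely_connected_def
proof (intro allI impI)
  define T where "T = f ` S"
  fix R assume RT: "compatible_cofinite_entourage (uniform_subgraph \<Delta> (f ` S)) R"
  have g: "is_graph \<Gamma>" using cg unfolding cofinite_graph_def by auto
  have gD: "is_graph \<Delta>" using cd unfolding cofinite_graph_def by auto
  have Sc: "S \<subseteq> carrier \<Gamma>" using sg unfolding is_subgraph_def by auto
  have Ssub: "\<forall>e\<in>S \<inter> edges \<Gamma>. src \<Gamma> e \<in> S \<and> tgt \<Gamma> e \<in> S \<and> rev \<Gamma> e \<in> S"
    using sg unfolding is_subgraph_def by auto
  have gmf: "f ` verts \<Gamma> \<subseteq> verts \<Delta>" "f ` edges \<Gamma> \<subseteq> edges \<Delta>"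
     "\<forall>e\<in>edges \<Gamma>. f (src \<Gamma> e) = src \<Delta> (f e) \<and> f (tgt \<Gamma> e) = tgt \<Delta> (f e) \<and>
        f (rev \<Gamma> e) = rev \<Delta> (f e)" using gm unfolding graph_map_def by auto
  have fv: "x \<in> verts \<Gamma> \<longleftrightarrow> f x \<in> verts \<Delta>" if "x \<in> S" for x
    using that Sc gmf(1,2) unfolding edges_def by blast
  have fe: "x \<in> edges \<Gamma>" "f x \<in> edges \<Delta>" if "x \<in> S" "x \<notin> verts \<Gamma>" for x
    using that Sc gmf(2) unfolding edges_def by blast+
  have Tc: "T \<subseteq> carrier \<Delta>" using Sc gmf(1,2) gD unfolding T_def edges_def is_graph_def by blast
  have Tsub: "\<forall>e\<in>T \<inter> edges \<Delta>. src \<Delta> e \<in> T \<and> tgt \<Delta> e \<in> T"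
  proof
    fix e assume e: "e \<in> T \<inter> edges \<Delta>"
    then obtain x where x: "x \<in> S" "e = f x" unfolding T_def by auto
    then have "x \<notin> verts \<Gamma>" using fv e unfolding edges_def by auto
    then have "x \<in> S \<inter> edges \<Gamma>" using x Sc unfolding edges_def by auto
    then show "src \<Delta> e \<in> T \<and> tgt \<Delta> e \<in> T" using Ssub gmf(3) x unfolding T_def by (metis IntD2 image_eqI)
  qed
  have RT': "R \<in> {D \<inter> (T \<times> T) | D. D \<in> unif \<Delta>}" "compatible (uniform_subgraph \<Delta> T) R" "finite (T // R)"
    using RT unfolding compatible_cofinite_entourage_def T_def by auto
  then obtain D where D: "D \<in> unif \<Delta>" "R = D \<inter> (T \<times> T)" by blast
  have cR: "equiv T R" "R \<subseteq> ((verts \<Delta> \<inter> T) \<times> (verts \<Delta> \<inter> T)) \<union> ((T - verts \<Delta>) \<times> (T - verts \<Delta>))"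
    "\<forall>e e'. (e, e') \<in> R \<and> e \<in> T - verts \<Delta> \<longrightarrow>
        (src \<Delta> e, src \<Delta> e') \<in> R \<and> (tgt \<Delta> e, tgt \<Delta> e') \<in> R \<and> (rev \<Delta> e, rev \<Delta> e') \<in> R"
    "\<forall>e\<in>T - verts \<Delta>. (e, rev \<Delta> e) \<notin> R"
    using RT'(2) unfolding compatible_def by auto
  define R' where "R' = {(x,y). x \<in> S \<and> y \<in> S \<and> (f x, f y) \<in> R}"
  have eqS: "equiv S R'" using cR(1) unfolding R'_def T_def equiv_def refl_on_def sym_def trans_def by blast
  have VE: "x \<in> verts \<Gamma> \<longleftrightarrow> y \<in> verts \<Gamma>" if "(x,y) \<in> R'" for x y
    using that cR(2) fv unfolding R'_def by blast
  have cR': "compatible (uniform_subgraph \<Gamma> S) R'"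
    unfolding compatible_def us_simps
  proof (intro conjI eqS)
    show "R' \<subseteq> (verts \<Gamma> \<inter> S) \<times> (verts \<Gamma> \<inter> S) \<union> (S - verts \<Gamma>) \<times> (S - verts \<Gamma>)"
      using VE unfolding R'_def by auto
    show "\<forall>e e'. (e, e') \<in> R' \<and> e \<in> S - verts \<Gamma> \<longrightarrow>
        (src \<Gamma> e, src \<Gamma> e') \<in> R' \<and> (tgt \<Gamma> e, tgt \<Gamma> e') \<in> R' \<and> (rev \<Gamma> e, rev \<Gamma> e') \<in> R'"
    proof (intro allI impI)
      fix e e' assume a: "(e, e') \<in> R' \<and> e \<in> S - verts \<Gamma>"
      then have e'S: "e' \<in> S - verts \<Gamma>" using VE unfolding R'_def by auto
      have ee: "e \<in> S \<inter> edges \<Gamma>" "e' \<in> S \<inter> edges \<Gamma>" using a e'S Sc unfolding edges_def by auto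
      have "f e \<in> T - verts \<Delta>" using a fv unfolding T_def by auto
      moreover have "(f e, f e') \<in> R" using a unfolding R'_def by auto
      ultimately have "(src \<Delta> (f e), src \<Delta> (f e')) \<in> R \<and> (tgt \<Delta> (f e), tgt \<Delta> (f e')) \<in> R \<and> (rev \<Delta> (f e), rev \<Delta> (f e')) \<in> R"
        using cR(3) by blast
      then show "(src \<Gamma> e, src \<Gamma> e') \<in> R' \<and> (tgt \<Gamma> e, tgt \<Gamma> e') \<in> R' \<and> (rev \<Gamma> e, rev \<Gamma> e') \<in> R'"
        using gmf(3) ee Ssub unfolding R'_def by auto
    qed
    show "\<forall>e\<in>S - verts \<Gamma>. (e, rev \<Gamma> e) \<notin> R'"
    proof
      fix e assume e: "e \<in> S - verts \<Gamma>"
      then have "e \<in> edges \<Gamma>" using Sc unfolding edges_def by auto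
      then have "f (rev \<Gamma> e) = rev \<Delta> (f e)" using gmf(3) by auto
      moreover have "f e \<in> T - verts \<Delta>" using e fv unfolding T_def by auto
      ultimately show "(e, rev \<Gamma> e) \<notin> R'" using cR(4) unfolding R'_def by auto
    qed
  qed
  define D' where "D' = {(x, y). x \<in> carrier \<Gamma> \<and> y \<in> carrier \<Gamma> \<and> (f x, f y) \<in> D}"
  have D': "D' \<in> unif \<Gamma>" using uc D(1) unfolding unif_continuous_def D'_def by auto
  have "R' = D' \<inter> (S \<times> S)" unfolding R'_def D'_def D(2) T_def using Sc by auto
  then have uR': "R' \<in> unif (uniform_subgraph \<Gamma> S)" using D' by auto
  have "S // R' \<subseteq> (\<lambda>C. f -` C \<inter> S) ` (T // R)"
  proof
    fix C assume "C \<in> S // R'"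
    then obtain x where x: "x \<in> S" "C = R'``{x}" by (auto elim: quotientE)
    then have "C = f -` (R``{f x}) \<inter> S" unfolding R'_def by auto
    moreover have "R``{f x} \<in> T // R" using x unfolding T_def by (auto intro: quotientI)
    ultimately show "C \<in> (\<lambda>C. f -` C \<inter> S) ` (T // R)" by auto
  qed
  then have "finite (S // R')" using RT'(3) by (meson finite_surj)
  then have "compatible_cofinite_entourage (uniform_subgraph \<Gamma> S) R'"
    unfolding compatible_cofinite_entourage_def using uR' cR' by simp
  then have "path_connected_graph (quotient_graph (uniform_subgraph \<Gamma> S) R')"
    using cc unfolding cofinitely_connected_def by auto
  then have qS: "qconn (uniform_subgraph \<Gamma> S) R'"
    using qconnA[OF cR' wfg_us[OF g Sc]] Ssub by auto
  have wT: "wfg (uniform_subgraph \<Delta> T)" using wfg_us[OF gD Tc Tsub] .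
  have mapstep: "(f x, f y) \<in> (R \<union> qstep (uniform_subgraph \<Delta> T) R)\<^sup>*"
    if "(x,y) \<in> R' \<union> qstep (uniform_subgraph \<Gamma> S) R'" for x y
  proof -
    from that show ?thesis
    proof
      assume "(x,y) \<in> R'" then show ?thesis unfolding R'_def by auto
    next
      assume "(x,y) \<in> qstep (uniform_subgraph \<Gamma> S) R'"
      then obtain e where e: "e \<in> S - verts \<Gamma>" "(x, src \<Gamma> e) \<in> R'" "(tgt \<Gamma> e, y) \<in> R'"
        unfolding qstep_def by auto
      have "e \<in> edges \<Gamma>" using e Sc unfolding edges_def by auto
      then have "f (src \<Gamma> e) = src \<Delta> (f e)" "f (tgt \<Gamma> e) = tgt \<Delta> (f e)" using gmf(3) by auto
      moreover have "f e \<in> T - verts \<Delta>" using e fv unfolding T_def by auto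
      ultimately have "(f x, f y) \<in> qstep (uniform_subgraph \<Delta> T) R"
        using e unfolding qstep_def R'_def by auto
      then show ?thesis by auto
    qed
  qed
  have "qconn (uniform_subgraph \<Delta> T) R"
    unfolding qconn_def us_simps
  proof (intro ballI)
    fix v w assume v: "v \<in> verts \<Delta> \<inter> T" and w: "w \<in> verts \<Delta> \<inter> T"
    obtain x where x: "x \<in> S" "v = f x" using v unfolding T_def by auto
    obtain y where y: "y \<in> S" "w = f y" using w unfolding T_def by auto
    have "x \<in> verts \<Gamma>" "y \<in> verts \<Gamma>" using x y v w fv by auto
    then have "(x,y) \<in> (R' \<union> qstep (uniform_subgraph \<Gamma> S) R')\<^sup>*"
      using qS x y unfolding qconn_def by auto
    from rtrancl_map[OF this mapstep] show "(v,w) \<in> (R \<union> qstep (uniform_subgraph \<Delta> T) R)\<^sup>*"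
      using x y by simp
  qed
  from qconnB[OF RT'(2) wT this] show "path_connected_graph (quotient_graph (uniform_subgraph \<Delta> (f ` S)) R)"
    unfolding T_def .
qed

theorem mainTheorem2:
  fixes \<Gamma> :: "'a cgraph" and S :: "'a set"
  assumes "cofinite_graph \<Gamma>"
    and "is_subgraph S \<Gamma>"
  shows "(path_connected_graph (uniform_subgraph \<Gamma> S) \<longrightarrow>
            cofinitely_connected (uniform_subgraph \<Gamma> S))
       \<and> (cofinitely_connected (uniform_subgraph \<Gamma> S) \<longrightarrow>
            cofinitely_connected (uniform_subgraph \<Gamma> (unif_closure \<Gamma> S)))
       \<and> (\<forall>(\<Delta> :: 'b cgraph) f. cofinite_graph \<Delta> \<and> graph_map \<Gamma> \<Delta> f \<and> unif_continuous \<Gamma> \<Delta> f \<and>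
            cofinitely_connected (uniform_subgraph \<Gamma> S) \<longrightarrow>
            cofinitely_connected (uniform_subgraph \<Delta> (f ` S)))"
proof (intro conjI impI allI)
  have g: "is_graph \<Gamma>" using assms(1) unfolding cofinite_graph_def by auto
  have Sc: "S \<subseteq> carrier \<Gamma>" using assms(2) unfolding is_subgraph_def by auto
  have w: "wfg (uniform_subgraph \<Gamma> S)" using wfg_us[OF g Sc] assms(2) unfolding is_subgraph_def by auto
  assume p: "path_connected_graph (uniform_subgraph \<Gamma> S)"
  show "cofinitely_connected (uniform_subgraph \<Gamma> S)"
    unfolding cofinitely_connected_def
  proof (intro allI impI)
    fix R assume "compatible_cofinite_entourage (uniform_subgraph \<Gamma> S) R"
    then have c: "compatible (uniform_subgraph \<Gamma> S) R" unfolding compatible_cofinite_entourage_def by auto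
    show "path_connected_graph (quotient_graph (uniform_subgraph \<Gamma> S) R)"
      using qconnB[OF c w part1[OF w p c]] .
  qed
next
  assume "cofinitely_connected (uniform_subgraph \<Gamma> S)"
  then show "cofinitely_connected (uniform_subgraph \<Gamma> (unif_closure \<Gamma> S))"
    using part2[OF assms] by blast
next
  fix \<Delta> :: "'b cgraph" and f
  assume "cofinite_graph \<Delta> \<and> graph_map \<Gamma> \<Delta> f \<and> unif_continuous \<Gamma> \<Delta> f \<and>
            cofinitely_connected (uniform_subgraph \<Gamma> S)"
  then show "cofinitely_connected (uniform_subgraph \<Delta> (f ` S))"
    using part3[OF assms] by blast
qed

end
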